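(* For $d\in\mathbb{N}$ and $i\in\{1,\dots,d\}$, $$\mu_i(T_d)\leqslant\frac{i}{2}\Big(1+\frac{d-i}{d+1}\Big).$$
   Context: $T_d=\operatorname{conv}(-\mathbb{1}_d,e_1,\dots,e_d)\subseteq\mathbb{R}^d$ is the standard terminal simplex. For a convex body $K\subseteq\mathbb{R}^d$ and $i\in\{1,\dots,d\}$, $\mu_i(K)=\min\{\mu\ge0:(\mu K+\mathbb{Z}^d)\cap U\ne\emptyset$ for every $(d-i)$-dimensional affine subspace $U\subseteq\mathbb{R}^d\}$. *)

theory Defs
  imports "HOL-Analysis.Analysis"
begin

definition int_lattice :: "(real ^ 'n) set" where
  "int_lattice = {z. \<forall>j. z $ j \<in> \<int>}"

definition terminal_simplex :: "(real ^ 'n) set" where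
  "terminal_simplex = convex hull (insert (- (\<chi> j. 1)) (range (\<lambda>j. axis j 1)))"

definition lattice_translates :: "real \<Rightarrow> (real ^ 'n) set \<Rightarrow> (real ^ 'n) set" where
  "lattice_translates \<mu> K = {\<mu> *\<^sub>R k + z | k z. k \<in> K \<and> z \<in> int_lattice}"

definition covering_minimum :: "nat \<Rightarrow> (real ^ 'n) set \<Rightarrow> real" where
  "covering_minimum i K = Inf {\<mu>. \<mu> \<ge> 0 \<and>
     (\<forall>U :: (real ^ 'n) set. affine U \<and> aff_dim U = int (CARD('n) - i)
        \<longrightarrow> lattice_translates \<mu> K \<inter> U \<noteq> {})}"

end

theory Submission
  imports Defs
begin

definition allowed :: "'a set \<Rightarrow> ('a \<Rightarrow> real) \<Rightarrow> ('a \<Rightarrow> real) \<Rightarrow> bool" where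
  "allowed J y c \<longleftrightarrow> (\<forall>l\<in>J. c l - y l \<in> \<int>) \<and> (\<forall>l\<in>J. \<forall>l'\<in>J. c l - c l' \<le> 1)"

lemma allowed_up:
  assumes "finite J" "J \<noteq> {}" "allowed J y c"
  shows "\<exists>c'. allowed J y c' \<and> sum c' J = sum c J + 1"
proof -
  obtain j where j: "j \<in> J" "c j = Min (c ` J)"
    using assms Min_in[of "c ` J"] by (metis (no_types, lifting) finite_imageI image_iff image_is_empty)
  have jm: "\<forall>l\<in>J. c j \<le> c l" using j assms by auto
  define c' where "c' = c(j := c j + 1)"
  have "allowed J y c'"
    unfolding allowed_def
  proof (intro conjI ballI)
    fix l assume l: "l \<in> J"
    show "c' l - y l \<in> \<int>"
    proof (cases "l = j")
      case True
      have "c l - y l \<in> \<int>" using assms(3) l unfolding allowed_def by auto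
      then have "(c l - y l) + 1 \<in> \<int>" by (simp add: Ints_add)
      then show ?thesis using True unfolding c'_def by (simp add: algebra_simps)
    next
      case False then show ?thesis using assms(3) l unfolding allowed_def c'_def by auto
    qed
  next
    fix l l' assume l: "l \<in> J" and l': "l' \<in> J"
    have "c l - c l' \<le> 1" using assms(3) l l' unfolding allowed_def by auto
    moreover have "c j \<le> c l" "c j \<le> c l'" using jm l l' by auto
    moreover have "c l - c j \<le> 1" using assms(3) l j(1) unfolding allowed_def by auto
    ultimately show "c' l - c' l' \<le> 1" unfolding c'_def by auto
  qed
  moreover have "sum c' J = sum c J + 1"
    unfolding c'_def using assms(1) j(1) by (simp add: sum.remove)
  ultimately show ?thesis by blast
qed

lemma allowed_n:
  assumes "finite J" "J \<noteq> {}" "allowed J y c0"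
  shows "\<exists>c. allowed J y c \<and> sum c J = sum c0 J + real n"
proof (induction n)
  case 0 then show ?case using assms by auto
next
  case (Suc n)
  then obtain c where "allowed J y c" "sum c J = sum c0 J + real n" by blast
  then show ?case using allowed_up[OF assms(1,2)] by fastforce
qed

lemma allowed_int:
  assumes "finite J" "J \<noteq> {}"
  shows "\<exists>c. allowed J y c \<and> sum c J = (\<Sum>l\<in>J. frac (y l)) + of_int m"
proof -
  define k where "k = card J"
  have k1: "k \<ge> 1" using assms k_def by (simp add: Suc_leI card_gt_0_iff)
  define N where "N = nat \<bar>m\<bar>"
  define c0 where "c0 = (\<lambda>l. frac (y l) - real N)"
  have a0: "allowed J y c0"
    unfolding allowed_def c0_def
  proof (intro conjI ballI)
    fix l assume "l \<in> J"
    have "frac (y l) - real N - y l = - of_int (floor (y l)) - of_int (int N)"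
      by (simp add: frac_def)
    also have "\<dots> = of_int (- floor (y l) - int N)" by simp
    finally show "frac (y l) - real N - y l \<in> \<int>" by (metis Ints_of_int)
  next
    fix l l' show "frac (y l) - real N - (frac (y l') - real N) \<le> 1"
      using frac_lt_1[of "y l"] frac_ge_0[of "y l'"] by linarith
  qed
  have s0: "sum c0 J = (\<Sum>l\<in>J. frac (y l)) - real k * real N"
    unfolding c0_def k_def by (simp add: sum_subtractf)
  have "int N \<ge> - m" using N_def by simp
  moreover have "int k * int N \<ge> int N" using k1 by (simp add: mult_le_cancel_right1)
  ultimately have "int k * int N \<ge> - m" by linarith
  define n where "n = nat (m + int k * int N)"
  have "real n = of_int m + real k * real N"
  proof -
    have "int n = m + int k * int N" unfolding n_def using \<open>int k * int N \<ge> - m\<close> by simp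
    then have "real_of_int (int n) = real_of_int (m + int k * int N)" by simp
    then show ?thesis by simp
  qed
  then show ?thesis using allowed_n[OF assms a0, of n] s0 by auto
qed

lemma cnt_le:
  fixes c :: "'a \<Rightarrow> real"
  assumes "finite J" "j \<in> J"
  shows "(\<Sum>l\<in>J. (if c l < c j then 1 else 0 :: real) + (if c j < c l then 1 else 0)) \<le> real (card J) - 1"
proof -
  have "(\<Sum>l\<in>J. (if c l < c j then 1 else 0 :: real) + (if c j < c l then 1 else 0))
      = (\<Sum>l\<in>J-{j}. (if c l < c j then 1 else 0 :: real) + (if c j < c l then 1 else 0))"
    using assms by (simp add: sum.remove)
  also have "\<dots> \<le> (\<Sum>l\<in>J-{j}. 1)" by (rule sum_mono) auto
  also have "\<dots> = real (card J) - 1"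
  proof -
    have "card J \<ge> 1" using assms by (metis One_nat_def Suc_leI card_gt_0_iff empty_iff)
    then show ?thesis using assms by (simp add: of_nat_diff)
  qed
  finally show ?thesis .
qed

lemma cnt_le1:
  fixes c :: "'a \<Rightarrow> real"
  assumes "finite J" "j \<in> J"
  shows "(\<Sum>l\<in>J. (if c l < c j then 1 else 0 :: real)) \<le> real (card J) - 1"
proof -
  have "(\<Sum>l\<in>J. (if c l < c j then 1 else 0 :: real)) \<le> (\<Sum>l\<in>J. (if c l < c j then 1 else 0 :: real) + (if c j < c l then 1 else 0))"
    by (rule sum_mono) auto
  then show ?thesis using cnt_le[OF assms, of c] by linarith
qed

lemma pairs_le:
  fixes c :: "'a \<Rightarrow> real"
  assumes "finite J"
  shows "2 * (\<Sum>j\<in>J. \<Sum>l\<in>J. (if c l < c j then 1 else 0 :: real)) \<le> real (card J) * (real (card J) - 1)"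
proof -
  have sw: "(\<Sum>j\<in>J. \<Sum>l\<in>J. (if c l < c j then 1 else 0 :: real)) = (\<Sum>j\<in>J. \<Sum>l\<in>J. (if c j < c l then 1 else 0 :: real))"
    by (rule sum.swap)
  have "2 * (\<Sum>j\<in>J. \<Sum>l\<in>J. (if c l < c j then 1 else 0 :: real))
     = (\<Sum>j\<in>J. \<Sum>l\<in>J. (if c l < c j then 1 else 0 :: real) + (if c j < c l then 1 else 0))"
    using sw by (simp add: sum.distrib)
  also have "\<dots> \<le> (\<Sum>j\<in>J. real (card J) - 1)"
    by (rule sum_mono) (use cnt_le[OF assms] in auto)
  also have "\<dots> = real (card J) * (real (card J) - 1)" by simp
  finally show ?thesis .
qed

lemma cover_core:
  fixes y :: "'a \<Rightarrow> real" and D \<mu> :: real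
  assumes fin: "finite J" and ne: "J \<noteq> {}" and kD: "real (card J) < D + 1"
    and mu: "(D+1)*\<mu> \<ge> real (card J) * (2*D+1 - real (card J))/2"
  shows "\<exists>w. (\<forall>l\<in>J. w l - y l \<in> \<int>) \<and> sum w J \<le> \<mu> \<and> (\<forall>l\<in>J. sum w J - (D+1) * w l \<le> \<mu>)"
proof -
  define k where "k = real (card J)"
  define A where "A = (k*(k-1)/2 - k*\<mu>)/(D+1-k)"
  define F where "F = (\<Sum>l\<in>J. frac (y l))"
  obtain c where ca: "allowed J y c" and cs: "sum c J = F + of_int (ceiling (A - F))"
    using allowed_int[OF fin ne, of y "ceiling (A - F)"] unfolding F_def by blast
  define C where "C = sum c J"
  have AC: "A \<le> C" "C < A + 1" unfolding C_def cs
    using le_of_int_ceiling[of "A - F"] ceiling_correct[of "A - F"] by linarith+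
  have pos: "D + 1 - k > 0" using kD k_def by simp
  have AD: "A * (D+1-k) = k*(k-1)/2 - k*\<mu>" unfolding A_def using pos by simp
  moreover have "k*(k-1)/2 - k*\<mu> \<le> (\<mu> - k) * (D+1-k)" using mu unfolding k_def by (simp add: algebra_simps field_simps)
  ultimately have "A * (D+1-k) \<le> (\<mu> - k) * (D+1-k)" by simp
  then have "A \<le> \<mu> - k" using pos by simp
  then have Cup: "C \<le> \<mu> - k + 1" using AC by simp
  define ind where "ind = (\<lambda>j l. if c l < c j then 1 else 0 :: real)"
  define cnt where "cnt = (\<lambda>j. \<Sum>l\<in>J. ind j l)"
  have P: "2 * (\<Sum>j\<in>J. cnt j) \<le> k * (k - 1)"
    using pairs_le[OF fin, of c] unfolding cnt_def ind_def k_def .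
  have "(\<Sum>j\<in>J. (D+1) * c j - (C + cnt j)) = (D+1) * C - k * C - (\<Sum>j\<in>J. cnt j)"
    unfolding C_def k_def by (simp add: sum_subtractf sum_distrib_left sum.distrib)
  also have "\<dots> \<ge> (D+1-k) * A - k*(k-1)/2"
  proof -
    have "(D+1-k) * A \<le> (D+1-k) * C" using AC pos by simp
    then show ?thesis using P by (simp add: algebra_simps field_simps)
  qed
  moreover have "(D+1-k) * A - k*(k-1)/2 = - k * \<mu>" using AD by (simp add: algebra_simps field_simps)
  ultimately have sumge: "(\<Sum>j\<in>J. (D+1) * c j - (C + cnt j)) \<ge> - k * \<mu>" by linarith
  have "\<exists>j\<in>J. (D+1) * c j - (C + cnt j) \<ge> - \<mu>"
  proof (rule ccontr)
    assume "\<not> ?thesis"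
    then have "\<forall>j\<in>J. (D+1) * c j - (C + cnt j) < - \<mu>" by auto
    then have "(\<Sum>j\<in>J. (D+1) * c j - (C + cnt j)) < (\<Sum>j\<in>J. - \<mu>)"
      using fin ne by (intro sum_strict_mono) auto
    then show False using sumge unfolding k_def by simp
  qed
  then obtain j where j: "j \<in> J" "(D+1) * c j - (C + cnt j) \<ge> - \<mu>" by blast
  define w where "w = (\<lambda>l. c l + ind j l)"
  have sw: "sum w J = C + cnt j" unfolding w_def C_def cnt_def by (simp add: sum.distrib)
  have cntj: "cnt j \<le> k - 1" unfolding cnt_def ind_def k_def using cnt_le1[OF fin j(1)] .
  have wge: "w l \<ge> c j" if "l \<in> J" for l
  proof -
    have "c j - c l \<le> 1" using ca that j(1) unfolding allowed_def by auto
    then show ?thesis unfolding w_def ind_def by auto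
  qed
  have "\<forall>l\<in>J. w l - y l \<in> \<int>"
  proof
    fix l assume "l \<in> J"
    then have "c l - y l \<in> \<int>" using ca unfolding allowed_def by auto
    moreover have "ind j l \<in> \<int>" unfolding ind_def by auto
    ultimately have "(c l - y l) + ind j l \<in> \<int>" by (rule Ints_add)
    then show "w l - y l \<in> \<int>" unfolding w_def by (simp add: algebra_simps)
  qed
  moreover have "sum w J \<le> \<mu>" using sw cntj Cup by simp
  moreover have "\<forall>l\<in>J. sum w J - (D+1) * w l \<le> \<mu>"
  proof
    fix l assume "l \<in> J"
    then have "(D+1) * c j \<le> (D+1) * w l" using wge pos k_def
      by (intro mult_left_mono) auto
    then show "sum w J - (D+1) * w l \<le> \<mu>" using sw j(2) by linarith
  qed
  ultimately show ?thesis by blast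
qed

lemma in_simplex:
  fixes t :: "real^'n"
  assumes s1: "(\<Sum>j\<in>UNIV. t$j) \<le> 1"
    and s2: "\<And>j. (\<Sum>j\<in>UNIV. t$j) - (real CARD('n) + 1) * t$j \<le> 1"
  shows "t \<in> terminal_simplex"
proof -
  define m1 :: "real^'n" where "m1 = - (\<chi> j. 1)"
  define ax where "ax = (\<lambda>j::'n. axis j (1::real))"
  define S where "S = insert m1 (range ax)"
  define d where "d = real CARD('n)"
  define st where "st = (\<Sum>j\<in>UNIV. t$j)"
  define l0 where "l0 = (1 - st) / (d + 1)"
  have dpos: "d + 1 > 0" unfolding d_def by simp
  have injax: "inj ax" unfolding ax_def inj_def by (simp add: axis_eq_axis)
  have axj: "ax k $ j = (if j = k then 1 else 0)" for k j unfolding ax_def axis_def by simp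
  have m1n: "m1 \<notin> range ax"
  proof
    assume "m1 \<in> range ax"
    then obtain k where "m1 = ax k" by auto
    then have "m1 $ k = ax k $ k" by simp
    then show False unfolding m1_def axj by simp
  qed
  have finS: "finite S" unfolding S_def by simp
  define u where "u = (\<lambda>p. if p = m1 then l0 else (\<Sum>j\<in>UNIV. t$j * p$j) + l0)"
  have uax: "u (ax k) = t$k + l0" for k
  proof -
    have "ax k \<noteq> m1" using m1n by auto
    moreover have "(\<Sum>j\<in>UNIV. t$j * ax k $ j) = t$k" unfolding axj by (simp add: if_distrib cong: if_cong)
    ultimately show ?thesis unfolding u_def by simp
  qed
  have l0ge: "l0 \<ge> 0" unfolding l0_def using s1 dpos st_def by simp
  have "t$k + l0 \<ge> 0" for k
  proof -
    have "t$k + l0 = ((d+1) * t$k + 1 - st) / (d+1)" unfolding l0_def using dpos by (simp add: field_simps)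
    moreover have "(d+1) * t$k + 1 - st \<ge> 0" using s2[of k] unfolding st_def d_def by linarith
    ultimately show ?thesis using dpos by simp
  qed
  then have upos: "\<forall>p\<in>S. 0 \<le> u p" unfolding S_def using l0ge uax by (auto simp: u_def)
  have sumS: "sum f S = f m1 + (\<Sum>k\<in>UNIV. f (ax k))" for f :: "real^'n \<Rightarrow> 'b::comm_monoid_add"
    unfolding S_def using m1n by (simp add: sum.reindex[OF injax])
  have "sum u S = 1"
  proof -
    have "sum u S = l0 + (\<Sum>k\<in>UNIV. t$k + l0)" unfolding sumS uax by (simp add: u_def)
    also have "\<dots> = (d+1) * l0 + st" unfolding st_def d_def by (simp add: sum.distrib algebra_simps)
    also have "\<dots> = 1" unfolding l0_def using dpos by simp
    finally show ?thesis .
  qed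
  moreover have "(\<Sum>p\<in>S. u p *\<^sub>R p) = t"
  proof (subst vec_eq_iff, rule allI)
    fix i
    have "(\<Sum>p\<in>S. u p *\<^sub>R p) $ i = l0 * m1 $ i + (\<Sum>k\<in>UNIV. (t$k + l0) * ax k $ i)"
      unfolding sumS uax by (simp add: u_def)
    also have "\<dots> = - l0 + (t$i + l0)" unfolding axj m1_def by (simp add: if_distrib cong: if_cong)
    finally show "(\<Sum>p\<in>S. u p *\<^sub>R p) $ i = t $ i" by simp
  qed
  ultimately have "t \<in> convex hull S" using convex_hull_finite[OF finS] upos by blast
  then show ?thesis unfolding terminal_simplex_def S_def m1_def ax_def .
qed

lemma span_axes_zero:
  fixes x :: "real^'n"
  assumes "x \<in> span E" "E \<subseteq> range (\<lambda>j. axis j 1)"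
  shows "{j. x$j \<noteq> 0} \<subseteq> {j. axis j 1 \<in> E}"
proof -
  define Z where "Z = {v::real^'n. \<forall>j. axis j 1 \<notin> E \<longrightarrow> v$j = 0}"
  have "subspace Z" unfolding Z_def subspace_def by auto
  moreover have "E \<subseteq> Z"
  proof
    fix e assume "e \<in> E"
    then obtain k where k: "e = axis k 1" using assms(2) by auto
    show "e \<in> Z" unfolding Z_def
    proof (intro CollectI allI impI)
      fix j assume "axis j 1 \<notin> E"
      then have "j \<noteq> k" using \<open>e \<in> E\<close> k by auto
      then show "e $ j = 0" using k by (simp add: axis_def)
    qed
  qed
  ultimately have "span E \<subseteq> Z" by (rule span_minimal[rotated])
  then show ?thesis using assms(1) unfolding Z_def by auto
qed

lemma main_cover:
  fixes U :: "(real^'n) set" and i :: nat and \<mu> :: real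
  assumes "affine U" "aff_dim U = int (CARD('n) - i)" "i \<le> CARD('n)" "\<mu> > 0"
    and mu: "(real CARD('n) + 1) * \<mu> = real i * (2 * real CARD('n) + 1 - real i) / 2"
  shows "lattice_translates \<mu> terminal_simplex \<inter> U \<noteq> {}"
proof -
  define d where "d = CARD('n)"
  have "U \<noteq> {}" using assms(2) aff_dim_empty[of U] by auto
  then obtain a where a: "a \<in> U" by auto
  define L where "L = (\<lambda>x. (-a) + x) ` U"
  have subL: "subspace L" unfolding L_def by (rule affine_diffs_subspace[OF assms(1) a])
  have "aff_dim U = int (dim L)" unfolding L_def
    by (rule aff_dim_eq_dim) (use a hull_inc[of a U] in blast)
  then have dimL: "dim L = d - i" using assms(2) d_def by simp
  obtain B where B: "B \<subseteq> L" "independent B" "L \<subseteq> span B" "card B = dim L"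
    using basis_exists by blast
  define Ax where "Ax = range (\<lambda>j::'n. axis j (1::real))"
  obtain B' where B': "B \<subseteq> B'" "B' \<subseteq> B \<union> Ax" "independent B'" "B \<union> Ax \<subseteq> span B'"
    using maximal_independent_subset_extend[of B "B \<union> Ax"] B(2) by blast
  define E where "E = B' - B"
  have EAx: "E \<subseteq> Ax" using B' E_def by auto
  have finB': "finite B'" "card B' \<le> d" using independent_bound[OF B'(3)] d_def by auto
  have "card E = card B' - card B" unfolding E_def using finB' B'(1) by (simp add: card_Diff_subset finite_subset)
  then have cardE: "card E \<le> i" using finB' B(4) dimL by simp
  have spanAx: "span Ax = UNIV"
  proof -
    have "x \<in> span Ax" for x :: "real^'n"
    proof -
      have "x = (\<Sum>j\<in>UNIV. x$j *\<^sub>R axis j 1)" using basis_expansion[of x] by (simp add: scalar_mult_eq_scaleR)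
      also have "\<dots> \<in> span Ax" unfolding Ax_def by (intro span_sum span_mul span_base) auto
      finally show ?thesis .
    qed
    then show ?thesis by auto
  qed
  have "Ax \<subseteq> span B'" using B'(4) by auto
  then have "span Ax \<subseteq> span B'" by (metis span_mono span_span)
  then have "span B' = UNIV" using spanAx by auto
  moreover have "B' = B \<union> E" unfolding E_def using B'(1) by auto
  ultimately have "- a \<in> span (B \<union> E)" by simp
  then obtain l v where lv: "- a = l + v" "l \<in> span B" "v \<in> span E" unfolding span_Un by auto
  have "span B \<subseteq> L" using span_minimal[OF B(1) subL] .
  then have "l \<in> L" using lv by auto
  then obtain x where x: "x \<in> U" "l = - a + x" unfolding L_def by auto
  have "x = a + l" using x(2) by simp
  then have xv: "x = - v" using lv(1) by (metis add.commute add_minus_cancel minus_add_distrib minus_minus)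
  have "x \<in> span E" using lv(3) xv by (simp add: span_neg)
  define J where "J = {j. x$j \<noteq> 0}"
  have "J \<subseteq> {j. axis j 1 \<in> E}" unfolding J_def by (rule span_axes_zero[OF \<open>x \<in> span E\<close>]) (use EAx Ax_def in auto)
  moreover have "card {j. axis j (1::real) \<in> E} = card E"
  proof -
    have "E = (\<lambda>j. axis j 1) ` {j. axis j 1 \<in> E}" using EAx Ax_def by auto
    moreover have "inj (\<lambda>j::'n. axis j (1::real))" unfolding inj_def by (simp add: axis_eq_axis)
    ultimately show ?thesis by (metis card_image inj_on_subset subset_UNIV)
  qed
  ultimately have cJ: "card J \<le> i" using cardE by (metis card_mono finite finite_subset order_trans)
  have "\<exists>w. (\<forall>l\<in>J. w l - x$l \<in> \<int>) \<and> sum w J \<le> \<mu> \<and> (\<forall>l\<in>J. sum w J - (real d+1) * w l \<le> \<mu>)"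
  proof (cases "J = {}")
    case True then show ?thesis using assms(4) by auto
  next
    case False
    show ?thesis
    proof (rule cover_core)
      show "finite J" by simp
      show "J \<noteq> {}" by fact
      show "real (card J) < real d + 1" using cJ assms(3) d_def by simp
      have "real (card J) * (2 * real d + 1 - real (card J)) \<le> real i * (2 * real d + 1 - real i)"
      proof -
        have "0 \<le> (real i - real (card J)) * (2 * real d + 1 - real i - real (card J))"
          using cJ assms(3) d_def by (intro mult_nonneg_nonneg) auto
        then show ?thesis by (simp add: algebra_simps)
      qed
      then show "real (card J) * (2 * real d + 1 - real (card J)) / 2 \<le> (real d + 1) * \<mu>"
        using mu d_def by simp
    qed
  qed
  then obtain w where w: "\<forall>l\<in>J. w l - x$l \<in> \<int>" "sum w J \<le> \<mu>" "\<forall>l\<in>J. sum w J - (real d+1) * w l \<le> \<mu>"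
    by blast
  define wv :: "real^'n" where "wv = (\<chi> j. if j \<in> J then w j else 0)"
  define z where "z = x - wv"
  define t where "t = (1/\<mu>) *\<^sub>R wv"
  have sumwv: "(\<Sum>j\<in>UNIV. wv$j) = sum w J" unfolding wv_def by (simp add: sum.If_cases)
  have "z \<in> int_lattice" unfolding int_lattice_def
  proof (intro CollectI allI)
    fix j
    show "z $ j \<in> \<int>"
    proof (cases "j \<in> J")
      case True
      then have "w j - x$j \<in> \<int>" using w(1) by blast
      then have "- (w j - x$j) \<in> \<int>" by (rule Ints_minus)
      then show ?thesis using True unfolding z_def wv_def by simp
    next
      case False then show ?thesis unfolding z_def wv_def J_def by simp
    qed
  qed
  moreover have "t \<in> terminal_simplex"
  proof (rule in_simplex)
    have st: "(\<Sum>j\<in>UNIV. t$j) = sum w J / \<mu>" unfolding t_def using sumwv by (simp add: sum_divide_distrib[symmetric])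
    show "(\<Sum>j\<in>UNIV. t$j) \<le> 1" unfolding st using w(2) assms(4) by simp
    fix j
    have "sum w J - (real d + 1) * wv$j \<le> \<mu>"
      using w(2,3) unfolding wv_def by (cases "j \<in> J") auto
    then have "(sum w J - (real d + 1) * wv$j) / \<mu> \<le> 1" using assms(4) by simp
    then show "(\<Sum>j\<in>UNIV. t$j) - (real CARD('n) + 1) * t$j \<le> 1"
      unfolding st unfolding t_def d_def by (simp add: diff_divide_distrib)
  qed
  moreover have "\<mu> *\<^sub>R t + z = x" unfolding t_def z_def using assms(4) by simp
  ultimately have "x \<in> lattice_translates \<mu> terminal_simplex" unfolding lattice_translates_def by blast
  then show ?thesis using x(1) by blast
qed

theorem corollary5p9:
  fixes i :: nat
  assumes "1 \<le> i" and "i \<le> CARD('n::finite)"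
  shows "covering_minimum i (terminal_simplex :: (real ^ 'n) set)
           \<le> real i / 2 * (1 + (real CARD('n) - real i) / (real CARD('n) + 1))"
proof -
  define \<mu> where "\<mu> = real i / 2 * (1 + (real CARD('n) - real i) / (real CARD('n) + 1))"
  have dp: "real CARD('n) + 1 > 0" by simp
  have mu: "(real CARD('n) + 1) * \<mu> = real i * (2 * real CARD('n) + 1 - real i) / 2"
    unfolding \<mu>_def using dp by (simp add: field_simps)
  have "real i * (2 * real CARD('n) + 1 - real i) > 0"
    using assms by (intro mult_pos_pos) auto
  then have mpos: "\<mu> > 0" using mu dp by (metis divide_pos_pos zero_less_numeral zero_less_mult_pos)
  have "\<mu> \<in> {\<mu>. \<mu> \<ge> 0 \<and>
     (\<forall>U :: (real ^ 'n) set. affine U \<and> aff_dim U = int (CARD('n) - i)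
        \<longrightarrow> lattice_translates \<mu> terminal_simplex \<inter> U \<noteq> {})}"
    using main_cover[OF _ _ assms(2) mpos mu] mpos by auto
  moreover have "bdd_below {\<mu>. \<mu> \<ge> 0 \<and>
     (\<forall>U :: (real ^ 'n) set. affine U \<and> aff_dim U = int (CARD('n) - i)
        \<longrightarrow> lattice_translates \<mu> terminal_simplex \<inter> U \<noteq> {})}"
    by (rule bdd_belowI[of _ 0]) auto
  ultimately have "covering_minimum i (terminal_simplex :: (real ^ 'n) set) \<le> \<mu>"
    unfolding covering_minimum_def by (rule cInf_lower)
  then show ?thesis unfolding \<mu>_def .
qed

end
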